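(* Let $m\geq 3$ be an integer and let $A$ be a multiset of points in $\mathbb{Z}^2$ with $|A|\geq 4m-3$ (counting multiplicities). If $\boldsymbol{p}\in\mathbb{R}^2$ is a point with $\boldsymbol{p}\notin A$ that has half-space depth $m$ with respect to $A$, then $A$ can be partitioned into $m$ submultisets $A_1,\dots,A_m$ with $\boldsymbol{p}\in\conv(A_i)$ for every $i$.
   Context: A point $\boldsymbol{p}$ has half-space depth $t$ with respect to a multiset $A$ if every closed half-plane containing $\boldsymbol{p}$ contains at least $t$ points of $A$, counted with multiplicity. A partition of a multiset into submultisets means the multiplicities of each element in the parts sum to its multiplicity in the multiset. *)

theory Defs
  imports "HOL-Analysis.Analysis" "HOL-Library.Multiset"
begin

definition lattice_pt :: "int \<times> int \<Rightarrow> real \<times> real" where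
  "lattice_pt q = (real_of_int (fst q), real_of_int (snd q))"

definition closed_halfplane :: "real \<times> real \<Rightarrow> real \<Rightarrow> (real \<times> real) set" where
  "closed_halfplane a b = {x. a \<bullet> x \<le> b}"

definition has_halfspace_depth ::
  "real \<times> real \<Rightarrow> (int \<times> int) multiset \<Rightarrow> nat \<Rightarrow> bool" where
  "has_halfspace_depth p A t \<longleftrightarrow>
     (\<forall>a b. a \<noteq> 0 \<longrightarrow> p \<in> closed_halfplane a b \<longrightarrow>
        t \<le> size (filter_mset (\<lambda>q. lattice_pt q \<in> closed_halfplane a b) A))"

end

theory Submission
  imports Defs
begin

lemma core:
  fixes x :: "nat \<Rightarrow> real" and n m :: nat
  assumes mono: "\<And>i j. i \<le> j \<Longrightarrow> x i \<le> x j"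
    and per: "\<And>k. x (k + n) = x k + 2*pi"
    and D: "\<And>k. x (k + m) - x k \<le> pi"
    and nm: "3*m \<le> n"
  shows "\<exists>a b. m \<le> a \<and> m \<le> b \<and> a + b + m \<le> n \<and>
     (\<forall>t<m. x (t+a) - x t \<le> pi \<and> x (t+a+b) - x (t+a) \<le> pi \<and> x (t+n) - x (t+a+b) \<le> pi)"
proof -
  define Pa where "Pa a \<longleftrightarrow> m \<le> a \<and> a + 2*m \<le> n \<and> (\<forall>t<m. x (t+a) - x t \<le> pi)" for a
  have Pam: "Pa m" using D nm by (auto simp: Pa_def)
  have Pab: "\<And>y. Pa y \<Longrightarrow> y \<le> n" by (auto simp: Pa_def)
  define a where "a = Greatest Pa"
  have Pa_a: "Pa a" unfolding a_def using GreatestI_nat[of Pa m n] Pam Pab by blast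
  have a_max: "\<And>y. Pa y \<Longrightarrow> y \<le> a" unfolding a_def using Greatest_le_nat[of Pa _ n] Pab by blast
  define Pb where "Pb b \<longleftrightarrow> m \<le> b \<and> a + b + m \<le> n \<and> (\<forall>t<m. x (t+a+b) - x (t+a) \<le> pi)" for b
  have Da: "x (t+a+m) - x (t+a) \<le> pi" for t using D[of "t+a"] .
  have Pbm: "Pb m" using Da Pa_a by (auto simp: Pb_def Pa_def)
  have Pbb: "\<And>y. Pb y \<Longrightarrow> y \<le> n" by (auto simp: Pb_def)
  define b where "b = Greatest Pb"
  have Pb_b: "Pb b" unfolding b_def using GreatestI_nat[of Pb m n] Pbm Pbb by blast
  have b_max: "\<And>y. Pb y \<Longrightarrow> y \<le> b" unfolding b_def using Greatest_le_nat[of Pb _ n] Pbb by blast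
  have third: "x (t+n) - x (t+a+b) \<le> pi" if tm: "t < m" for t
  proof (cases "a + b + m = n")
    case True
    then have "t + n = (t+a+b) + m" by simp
    then show ?thesis using D[of "t+a+b"] by (simp only:)
  next
    case False
    then have lt: "a + b + m < n" using Pb_b by (auto simp: Pb_def)
    have "\<not> Pa (a+1)" using a_max by fastforce
    moreover have "m \<le> a + 1" "a + 1 + 2*m \<le> n" using Pa_a Pb_b lt by (auto simp: Pa_def Pb_def)
    ultimately obtain t0 where t0: "t0 < m" "x (t0 + (a+1)) - x t0 > pi"
      unfolding Pa_def by auto
    have "\<not> Pb (b+1)" using b_max by fastforce
    moreover have "m \<le> b + 1" "a + (b + 1) + m \<le> n" using Pb_b lt by (auto simp: Pb_def)
    ultimately obtain t1 where t1: "t1 < m" "x (t1 + a + (b+1)) - x (t1 + a) > pi"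
      unfolding Pb_def by auto
    have am: "m \<le> a" using Pa_a by (auto simp: Pa_def)
    have bm: "m \<le> b" using Pb_b by (auto simp: Pb_def)
    have "t1 \<le> t0"
    proof (rule ccontr)
      assume "\<not> t1 \<le> t0"
      then have "x (t0 + (a+1)) \<le> x (t1 + a)" by (intro mono) auto
      then have "x (t1 + a + (b+1)) > x (t0 + n)" using t0 t1 per[of t0] by linarith
      moreover have "t1 + a + (b+1) \<le> t0 + n" using t1 lt by linarith
      ultimately show False using mono by fastforce
    qed
    show ?thesis
    proof (cases "t \<le> t0")
      case True
      have "x (t0 + (a+1)) \<le> x (t+a+b)" using True t0 bm by (intro mono) auto
      moreover have "x t \<le> x t0" using True by (intro mono)
      ultimately show ?thesis using t0 per[of t] by linarith
    next
      case False
      have "x (t1 + a + (b+1)) \<le> x (t+a+b)" using False \<open>t1 \<le> t0\<close> by (intro mono) auto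
      moreover have "x t \<le> x (t1+a)" using am tm by (intro mono) auto
      ultimately show ?thesis using t1 per[of t] by linarith
    qed
  qed
  show ?thesis
    apply (rule exI[of _ a], rule exI[of _ b])
    using Pa_a Pb_b third by (auto simp: Pa_def Pb_def)
qed

lemma opp_pair:
  fixes p P Q :: "real \<times> real"
  assumes "P = (fst p + r * c, snd p + r * s)" "Q = (fst p - r' * c, snd p - r' * s)"
    "r > 0" "r' > 0"
  shows "p \<in> convex hull {P, Q}"
proof -
  have "p = (r'/(r+r')) *\<^sub>R P + (r/(r+r')) *\<^sub>R Q"
  proof -
    have h: "r + r' \<noteq> 0" using assms(3,4) by simp
    have "r'/(r+r') * (a + r*c) + r/(r+r') * (a - r'*c) = a" for a c
    proof -
      have "r'/(r+r') * (a + r*c) + r/(r+r') * (a - r'*c) = (r'*(a + r*c) + r*(a - r'*c))/(r+r')"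
        by (simp add: add_divide_distrib)
      also have "\<dots> = a*(r+r')/(r+r')" by (simp add: algebra_simps)
      also have "\<dots> = a" using h by simp
      finally show ?thesis .
    qed
    then show ?thesis unfolding assms(1,2) by (simp add: prod_eq_iff)
  qed
  moreover have "r'/(r+r') + r/(r+r') = 1" using assms(3,4) by (simp add: add_divide_distrib[symmetric])
  moreover have "r'/(r+r') \<ge> 0" "r/(r+r') \<ge> 0" using assms(3,4) by auto
  ultimately show ?thesis unfolding convex_hull_2 by blast
qed

lemma tri:
  fixes p P1 P2 P3 :: "real \<times> real"
  assumes e1: "P1 = (fst p + r1 * cos \<alpha>, snd p + r1 * sin \<alpha>)"
    and e2: "P2 = (fst p + r2 * cos \<beta>, snd p + r2 * sin \<beta>)"
    and e3: "P3 = (fst p + r3 * cos \<gamma>, snd p + r3 * sin \<gamma>)"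
    and r: "r1 > 0" "r2 > 0" "r3 > 0"
    and g: "\<alpha> \<le> \<beta>" "\<beta> - \<alpha> \<le> pi" "\<beta> \<le> \<gamma>" "\<gamma> - \<beta> \<le> pi" "\<alpha> + 2*pi - \<gamma> \<le> pi"
  shows "p \<in> convex hull {P1, P2, P3}"
proof -
  define l1 where "l1 = sin (\<gamma> - \<beta>) / r1"
  define l2 where "l2 = sin (\<alpha> + 2*pi - \<gamma>) / r2"
  define l3 where "l3 = sin (\<beta> - \<alpha>) / r3"
  have s2: "sin (\<alpha> + 2*pi - \<gamma>) = sin (\<alpha> - \<gamma>)"
    by (metis add_diff_eq diff_add_eq sin_periodic)
  have l1: "l1 \<ge> 0" unfolding l1_def using g r by (intro divide_nonneg_pos sin_ge_zero) auto
  have l2: "l2 \<ge> 0" unfolding l2_def using g r by (intro divide_nonneg_pos sin_ge_zero) auto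
  have l3: "l3 \<ge> 0" unfolding l3_def using g r by (intro divide_nonneg_pos sin_ge_zero) auto
  have idc: "sin (\<gamma> - \<beta>) * cos \<alpha> + sin (\<alpha> - \<gamma>) * cos \<beta> + sin (\<beta> - \<alpha>) * cos \<gamma> = 0"
    by (simp add: sin_diff algebra_simps)
  have ids: "sin (\<gamma> - \<beta>) * sin \<alpha> + sin (\<alpha> - \<gamma>) * sin \<beta> + sin (\<beta> - \<alpha>) * sin \<gamma> = 0"
    by (simp add: sin_diff algebra_simps)
  show ?thesis
  proof (cases "l1 + l2 + l3 > 0")
    case True
    define S where "S = l1 + l2 + l3"
    have "p = (l1/S) *\<^sub>R P1 + (l2/S) *\<^sub>R P2 + (l3/S) *\<^sub>R P3"
    proof -
      have c1: "l1 * r1 = sin (\<gamma> - \<beta>)" "l2 * r2 = sin (\<alpha> - \<gamma>)" "l3 * r3 = sin (\<beta> - \<alpha>)"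
        using r s2 by (auto simp: l1_def l2_def l3_def)
      have "l1 * (r1 * cos \<alpha>) + l2 * (r2 * cos \<beta>) + l3 * (r3 * cos \<gamma>) = 0"
        using idc c1 by (simp add: mult.assoc[symmetric])
      moreover have "l1 * (r1 * sin \<alpha>) + l2 * (r2 * sin \<beta>) + l3 * (r3 * sin \<gamma>) = 0"
        using ids c1 by (simp add: mult.assoc[symmetric])
      ultimately have z: "l1 *\<^sub>R (P1 - p) + l2 *\<^sub>R (P2 - p) + l3 *\<^sub>R (P3 - p) = 0"
        unfolding e1 e2 e3 by (simp add: prod_eq_iff)
      have "l1 *\<^sub>R P1 + l2 *\<^sub>R P2 + l3 *\<^sub>R P3 = S *\<^sub>R p"
        using z by (simp add: S_def algebra_simps)
      then have "(1/S) *\<^sub>R (l1 *\<^sub>R P1 + l2 *\<^sub>R P2 + l3 *\<^sub>R P3) = p"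
        using True S_def by simp
      then show ?thesis by (simp add: scaleR_add_right)
    qed
    moreover have "l1/S + l2/S + l3/S = 1" using True by (simp add: S_def add_divide_distrib[symmetric])
    ultimately show ?thesis unfolding convex_hull_3 using l1 l2 l3 True S_def
      by (smt (verit) divide_nonneg_pos mem_Collect_eq)
  next
    case False
    then have "l3 = 0" using l1 l2 l3 by linarith
    then have "sin (\<beta> - \<alpha>) = 0" using r by (simp add: l3_def)
    then have "\<beta> - \<alpha> = 0 \<or> \<beta> - \<alpha> = pi" using sin_gt_zero[of "\<beta> - \<alpha>"] g by force
    then show ?thesis
    proof
      assume h: "\<beta> - \<alpha> = 0"
      then have "\<gamma> = \<alpha> + pi" using g by linarith
      then have "P3 = (fst p - r3 * cos \<alpha>, snd p - r3 * sin \<alpha>)" using e3 by simp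
      then have "p \<in> convex hull {P1, P3}" using opp_pair[OF e1 _ r(1) r(3)] by blast
      then show ?thesis by (meson hull_mono insert_mono subset_insertI subsetD)
    next
      assume h: "\<beta> - \<alpha> = pi"
      then have "\<beta> = \<alpha> + pi" by linarith
      then have "P2 = (fst p - r2 * cos \<alpha>, snd p - r2 * sin \<alpha>)" using e2 by simp
      then have "p \<in> convex hull {P1, P2}" using opp_pair[OF e1 _ r(1) r(2)] by blast
      then show ?thesis by (meson hull_mono insert_mono subset_insertI subsetD)
    qed
  qed
qed

lemma cos_nonneg_shift:
  fixes y :: real
  assumes "cos y \<ge> 0"
  shows "\<exists>s::int. - (pi/2) \<le> y + 2*pi * of_int s \<and> y + 2*pi * of_int s \<le> pi/2"
proof -
  define s where "s = \<lceil>(- (pi/2) - y) / (2*pi)\<rceil>"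
  have "(- (pi/2) - y) / (2*pi) \<le> s" unfolding s_def by simp
  then have lo: "- (pi/2) \<le> y + 2*pi * of_int s" using pi_gt_zero by (simp add: field_simps)
  have "s < (- (pi/2) - y) / (2*pi) + 1" unfolding s_def by linarith
  then have hi: "y + 2*pi * of_int s < 3*pi/2" using pi_gt_zero by (simp add: field_simps)
  have "cos (y + 2*pi * of_int s) = cos y * cos (2*pi * of_int s) - sin y * sin (2*pi * of_int s)"
    by (rule cos_add)
  also have "\<dots> = cos y" by (simp only: cos_int_2pin sin_int_2pin)
  finally have "cos (y + 2*pi * of_int s) = cos y" .
  moreover have "\<not> (pi/2 < y + 2*pi * of_int s)"
    using cos_lt_zero_pi[of "y + 2*pi * of_int s"] hi assms calculation by linarith
  ultimately show ?thesis using lo by (intro exI[of _ s]) linarith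
qed


lemma sum_filter_cls:
  fixes cls :: "'a \<Rightarrow> nat"
  shows "(\<Sum>i<k. filter_mset (\<lambda>j. cls j = i) M) = filter_mset (\<lambda>j. cls j < k) M"
  by (induction k) (auto simp: multiset_eq_iff)

lemma image_mset_sum_lt:
  "image_mset f (\<Sum>i<(k::nat). F i) = (\<Sum>i<k. image_mset f (F i))"
  by (induction k) auto

theorem lemma2:
  fixes m :: nat and A :: "(int \<times> int) multiset" and p :: "real \<times> real"
  assumes "m \<ge> 3"
    and "size A \<ge> 4 * m - 3"
    and "p \<notin> lattice_pt ` set_mset A"
    and "has_halfspace_depth p A m"
  shows "\<exists>B :: nat \<Rightarrow> (int \<times> int) multiset.
           (\<Sum>i<m. B i) = A \<and>
           (\<forall>i<m. p \<in> convex hull (lattice_pt ` set_mset (B i)))"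
proof -
  define n where "n = size A"
  have m1: "1 \<le> m" and nm: "3*m \<le> n" using assms(1,2) by (auto simp: n_def)
  have n0: "n > 0" using nm m1 by linarith
  define v where "v q = lattice_pt q - p" for q
  define z where "z q = Complex (fst (v q)) (snd (v q))" for q
  define ang where "ang q = Arg (z q)" for q
  define rad where "rad q = cmod (z q)" for q
  have polar: "rad q > 0 \<and> lattice_pt q = (fst p + rad q * cos (ang q), snd p + rad q * sin (ang q))"
    if qA: "q \<in># A" for q
  proof -
    have "v q \<noteq> 0" using assms(3) qA by (auto simp: v_def)
    then have "z q \<noteq> 0" by (auto simp: z_def complex_eq_iff prod_eq_iff)
    then have "rad q > 0" by (simp add: rad_def)
    moreover have "Re (z q) = rad q * cos (ang q)" "Im (z q) = rad q * sin (ang q)"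
      using rcis_cmod_Arg[of "z q"] Re_rcis Im_rcis unfolding rad_def ang_def by metis+
    ultimately show ?thesis by (auto simp: z_def v_def prod_eq_iff)
  qed
  have angb: "- pi < ang q \<and> ang q \<le> pi" for q unfolding ang_def by (rule Arg_bounded)
  obtain L0 where L0: "mset L0 = A" using ex_mset by blast
  define L where "L = sort_key ang L0"
  have LA: "mset L = A" unfolding L_def using L0 by simp
  have sortedL: "sorted (map ang L)" unfolding L_def by (rule sorted_sort_key)
  have lenL: "length L = n" unfolding n_def using LA by (metis size_mset)
  have inA: "L ! j \<in># A" if "j < n" for j using that lenL LA by (metis nth_mem set_mset_mset)
  define x where "x k = ang (L ! (k mod n)) + 2*pi*real (k div n)" for k
  have xstep: "x k \<le> x (Suc k)" for k
  proof (cases "Suc (k mod n) = n")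
    case True
    then have "Suc k mod n = 0" "Suc k div n = Suc (k div n)" by (simp_all add: mod_Suc div_Suc)
    then show ?thesis unfolding x_def using angb[of "L ! (k mod n)"] angb[of "L ! 0"]
      by (simp add: algebra_simps)
  next
    case False
    then have e: "Suc k mod n = Suc (k mod n)" "Suc k div n = k div n" by (simp_all add: mod_Suc div_Suc)
    have "Suc (k mod n) < n" using False n0 mod_less_divisor[of n k] by linarith
    then have "map ang L ! (k mod n) \<le> map ang L ! (Suc (k mod n))"
      using sortedL lenL by (intro sorted_nth_mono) auto
    then show ?thesis unfolding x_def e using lenL \<open>Suc (k mod n) < n\<close> by simp
  qed
  have mono: "x i \<le> x j" if "i \<le> j" for i j using lift_Suc_mono_le[of x, OF xstep that] .
  have per: "x (k + n) = x k + 2*pi" for k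
    using n0 by (simp add: x_def algebra_simps)
  have xsmall: "x j = ang (L ! j)" if "j < n" for j using that by (simp add: x_def)
  have xshift: "x (j + n * s) = ang (L ! j) + 2*pi*real s" if "j < n" for j s
    using that n0 by (simp add: x_def)
  have D: "x (k + m) - x k \<le> pi" for k
  proof (rule ccontr)
    assume "\<not> x (k + m) - x k \<le> pi"
    then have gt: "x (k + m) - x k > pi" by simp
    define \<mu> where "\<mu> = (x k + x (k+m)) / 2"
    define av where "av = (- cos \<mu>, - sin \<mu>)"
    define bv where "bv = av \<bullet> p"
    have av0: "av \<noteq> 0"
    proof
      assume "av = 0"
      then have "cos \<mu> = 0" "sin \<mu> = 0" by (auto simp: av_def prod_eq_iff)
      then show False using sin_cos_squared_add[of \<mu>] by simp
    qed
    have "p \<in> closed_halfplane av bv" by (simp add: closed_halfplane_def bv_def)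
    then have "m \<le> size (filter_mset (\<lambda>q. lattice_pt q \<in> closed_halfplane av bv) A)"
      using assms(4) av0 unfolding has_halfspace_depth_def by blast
    also have "\<dots> = card {j. j < n \<and> lattice_pt (L ! j) \<in> closed_halfplane av bv}"
      unfolding LA[symmetric] mset_filter[symmetric] size_mset length_filter_conv_card lenL ..
    also have "\<dots> \<le> card ((\<lambda>j'. j' mod n) ` {k<..<k+m})"
    proof (rule card_mono)
      show "finite ((\<lambda>j'. j' mod n) ` {k<..<k+m})" by simp
      show "{j. j < n \<and> lattice_pt (L ! j) \<in> closed_halfplane av bv} \<subseteq> (\<lambda>j'. j' mod n) ` {k<..<k+m}"
      proof
        fix j assume "j \<in> {j. j < n \<and> lattice_pt (L ! j) \<in> closed_halfplane av bv}"
        then have jn: "j < n" and hp: "av \<bullet> lattice_pt (L ! j) \<le> bv"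
          by (auto simp: closed_halfplane_def)
        define q where "q = L ! j"
        have pq: "rad q > 0" "lattice_pt q = (fst p + rad q * cos (ang q), snd p + rad q * sin (ang q))"
          using polar[OF inA[OF jn]] by (auto simp: q_def)
        have "av \<bullet> lattice_pt q - av \<bullet> p = - rad q * cos (ang q - \<mu>)"
          unfolding pq(2) av_def by (cases p) (simp add: cos_diff algebra_simps)
        then have "rad q * cos (ang q - \<mu>) \<ge> 0" using hp by (simp add: q_def bv_def)
        then have "cos (ang q - \<mu>) \<ge> 0" using pq(1) by (simp add: zero_le_mult_iff)
        then obtain s :: int where s: "- (pi/2) \<le> ang q - \<mu> + 2*pi * of_int s"
          "ang q - \<mu> + 2*pi * of_int s \<le> pi/2"
          using cos_nonneg_shift by blast
        define w where "w = ang q + 2*pi * of_int s"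
        have s': "- (pi/2) \<le> w - \<mu>" "w - \<mu> \<le> pi/2" using s unfolding w_def by linarith+
        have wlo: "x k < w" using s'(1) gt unfolding \<mu>_def by (simp add: field_simps)
        have whi: "w < x (k+m)" using s'(2) gt unfolding \<mu>_def by (simp add: field_simps)
        have "x 0 \<le> x k" by (rule mono) simp
        moreover have "x 0 > - pi" using xsmall[OF n0] angb by simp
        ultimately have "s \<ge> 0"
        proof -
          assume "x 0 \<le> x k" "x 0 > - pi"
          show "s \<ge> 0"
          proof (rule ccontr)
            assume "\<not> s \<ge> 0"
            then have "of_int s \<le> (-1::real)" by simp
            then have "2*pi * of_int s \<le> 2*pi*(-1)" by (intro mult_left_mono) auto
            then have "w \<le> pi - 2*pi" using angb[of q] unfolding w_def by linarith
            then show False using wlo \<open>x 0 \<le> x k\<close> \<open>x 0 > - pi\<close> by linarith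
          qed
        qed
        define j' where "j' = j + n * nat s"
        have xj': "x j' = w" unfolding j'_def w_def q_def using xshift[OF jn, of "nat s"] \<open>s \<ge> 0\<close>
          by simp
        have "k < j'"
        proof (rule ccontr)
          assume "\<not> k < j'" then have "x j' \<le> x k" by (intro mono) simp
          then show False using xj' wlo by simp
        qed
        moreover have "j' < k + m"
        proof (rule ccontr)
          assume "\<not> j' < k + m" then have "x (k+m) \<le> x j'" by (intro mono) simp
          then show False using xj' whi by simp
        qed
        moreover have "j' mod n = j" using jn by (simp add: j'_def)
        ultimately show "j \<in> (\<lambda>j'. j' mod n) ` {k<..<k+m}" by force
      qed
    qed
    also have "\<dots> \<le> card {k<..<k+m}" by (rule card_image_le) simp
    also have "\<dots> = m - 1" by simp
    finally show False using m1 by linarith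
  qed
  obtain a b where ab: "m \<le> a" "m \<le> b" "a + b + m \<le> n"
    and arcs: "\<And>t. t < m \<Longrightarrow> x (t+a) - x t \<le> pi \<and> x (t+a+b) - x (t+a) \<le> pi \<and> x (t+n) - x (t+a+b) \<le> pi"
    using core[of x n m, OF mono per D nm] by blast
  define cls where "cls j = (if j < m then j else if j < a then 0 else if j < a + m then j - a
     else if j < a + b then 0 else if j < a + b + m then j - a - b else 0)" for j
  define M where "M = mset [0..<n]"
  define B where "B i = image_mset (\<lambda>j. L ! j) (filter_mset (\<lambda>j. cls j = i) M)" for i
  have clsm: "cls j < m" for j using m1 by (auto simp: cls_def)
  have "(\<Sum>i<m. B i) = image_mset (\<lambda>j. L ! j) (\<Sum>i<m. filter_mset (\<lambda>j. cls j = i) M)"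
    unfolding B_def image_mset_sum_lt ..
  also have "\<dots> = image_mset (\<lambda>j. L ! j) M"
    unfolding sum_filter_cls using clsm by simp
  also have "\<dots> = A" unfolding M_def mset_map[symmetric] using lenL LA map_nth[of L] by simp
  finally have sumB: "(\<Sum>i<m. B i) = A" .
  have hull: "p \<in> convex hull (lattice_pt ` set_mset (B t))" if tm: "t < m" for t
  proof -
    have i1: "t < n" "t + a < n" "t + a + b < n" using tm ab by linarith+
    have c1: "cls t = t" "cls (t+a) = t" "cls (t+a+b) = t" using tm ab by (auto simp: cls_def)
    have sub: "{lattice_pt (L!t), lattice_pt (L!(t+a)), lattice_pt (L!(t+a+b))} \<subseteq> lattice_pt ` set_mset (B t)"
      using i1 c1 by (auto simp: B_def M_def)
    have "p \<in> convex hull {lattice_pt (L!t), lattice_pt (L!(t+a)), lattice_pt (L!(t+a+b))}"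
    proof (rule tri)
      show "lattice_pt (L!t) = (fst p + rad (L!t) * cos (x t), snd p + rad (L!t) * sin (x t))"
        using polar[OF inA[OF i1(1)]] xsmall[OF i1(1)] by simp
      show "lattice_pt (L!(t+a)) = (fst p + rad (L!(t+a)) * cos (x (t+a)), snd p + rad (L!(t+a)) * sin (x (t+a)))"
        using polar[OF inA[OF i1(2)]] xsmall[OF i1(2)] by simp
      show "lattice_pt (L!(t+a+b)) = (fst p + rad (L!(t+a+b)) * cos (x (t+a+b)), snd p + rad (L!(t+a+b)) * sin (x (t+a+b)))"
        using polar[OF inA[OF i1(3)]] xsmall[OF i1(3)] by simp
      show "rad (L!t) > 0" "rad (L!(t+a)) > 0" "rad (L!(t+a+b)) > 0"
        using polar inA i1 by blast+
      show "x t \<le> x (t+a)" "x (t+a) \<le> x (t+a+b)" by (rule mono, simp)+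
      show "x (t+a) - x t \<le> pi" "x (t+a+b) - x (t+a) \<le> pi" using arcs[OF tm] by auto
      show "x t + 2*pi - x (t+a+b) \<le> pi" using arcs[OF tm] per[of t] by linarith
    qed
    then show ?thesis using hull_mono[OF sub] by blast
  qed
  show ?thesis using sumB hull by blast
qed

end
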